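(* Every rigidity circuit $C$ has a resultant tree. That is, for every rigidity circuit $C$ with $n$ vertices there is a rooted binary tree $T_C$ with root $C$ such that: (a) every node of $T_C$ is a rigidity circuit; (b) every circuit at level $l$ of $T_C$ (the root being at level $0$) has at most $n-l$ vertices; (c) every internal node $C_i$ has exactly two children $C_j, C_k$, and there is a common edge $e\in E(C_j)\cap E(C_k)$ with $C_i=\mathrm{CR}(C_j,C_k,e)$; (d) every leaf is a complete graph $K_4$. In particular every rigidity circuit can be obtained from copies of $K_4$ by repeated combinatorial resultant operations.
   Context: All graphs are finite and simple; a graph is given by a set of edges, and its vertex set is the set of endpoints of its edges. A graph $G=(V,E)$ is $(2,3)$-sparse if every subset $V'\subseteq V$ with $|V'|\ge 2$ spans at most $2|V'|-3$ edges. A Laman graph is a $(2,3)$-sparse graph with $|E|=2|V|-3$. A rigidity circuit (also called sparsity circuit) is a graph $C=(V,E)$ with $|E|=2|V|-2$ such that every proper subset $V'\subsetneq V$ with $|V'|\ge 2$ spans at most $2|V'|-3$ edges; equivalently, a minimal edge set which is not $(2,3)$-sparse (a circuit of the $(2,3)$-sparsity matroid on the edges of $K_n$). Combinatorial resultant: for two distinct graphs $G_1=(V_1,E_1)$, $G_2=(V_2,E_2)$ and a common edge $e\in E_1\cap E_2$, $\mathrm{CR}(G_1,G_2,e)$ is the graph with vertex set $V_1\cup V_2$ and edge set $(E_1\cup E_2)\setminus\{e\}$. *)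

theory Defs
  imports Main
begin

text \<open>A (finite, simple) graph is given by its edge set: a finite set of
  2-element vertex sets. Its vertex set is the set of endpoints of edges.\<close>

definition graph :: "'a set set \<Rightarrow> bool" where
  "graph E \<longleftrightarrow> finite E \<and> (\<forall>e\<in>E. card e = 2)"

definition verts :: "'a set set \<Rightarrow> 'a set" where
  "verts E = \<Union>E"

definition span :: "'a set set \<Rightarrow> 'a set \<Rightarrow> 'a set set" where
  "span E V' = {e \<in> E. e \<subseteq> V'}"

definition rigidity_circuit :: "'a set set \<Rightarrow> bool" where
  "rigidity_circuit E \<longleftrightarrow> graph E \<and>
     int (card E) = 2 * int (card (verts E)) - 2 \<and>
     (\<forall>V'. V' \<subset> verts E \<and> card V' \<ge> 2 \<longrightarrow>
        int (card (span E V')) \<le> 2 * int (card V') - 3)"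

definition is_K4 :: "'a set set \<Rightarrow> bool" where
  "is_K4 E \<longleftrightarrow> (\<exists>V. card V = 4 \<and> E = {{x, y} | x y. x \<in> V \<and> y \<in> V \<and> x \<noteq> y})"

definition CR :: "'a set set \<Rightarrow> 'a set set \<Rightarrow> 'a set \<Rightarrow> 'a set \<times> 'a set set" where
  "CR E1 E2 e = (verts E1 \<union> verts E2, (E1 \<union> E2) - {e})"

datatype 'a rtree = Leaf "'a set set" | Node "'a set set" "'a rtree" "'a rtree"

fun root :: "'a rtree \<Rightarrow> 'a set set" where
  "root (Leaf G) = G"
| "root (Node G _ _) = G"

text \<open>resultant_tree n l T: T, placed at level l, satisfies conditions (a)--(d)
  for a root circuit with n vertices.\<close>
fun resultant_tree :: "nat \<Rightarrow> nat \<Rightarrow> 'a rtree \<Rightarrow> bool" where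
  "resultant_tree n l (Leaf G) \<longleftrightarrow>
     rigidity_circuit G \<and> card (verts G) + l \<le> n \<and> is_K4 G"
| "resultant_tree n l (Node G T1 T2) \<longleftrightarrow>
     rigidity_circuit G \<and> card (verts G) + l \<le> n \<and>
     root T1 \<noteq> root T2 \<and>
     (\<exists>e \<in> root T1 \<inter> root T2. (verts G, G) = CR (root T1) (root T2) e) \<and>
     resultant_tree n (Suc l) T1 \<and> resultant_tree n (Suc l) T2"

end

theory Submission
  imports Defs
begin


definition tight :: "'a set set \<Rightarrow> 'a set \<Rightarrow> bool" where
  "tight C X \<longleftrightarrow> int (card (span C X)) = 2 * int (card X) - 3"

definition deg :: "'a set set \<Rightarrow> 'a \<Rightarrow> nat" where
  "deg C u = card {f\<in>C. u \<in> f}"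

lemma rc_finite: "rigidity_circuit C \<Longrightarrow> finite C"
  by (simp add: rigidity_circuit_def graph_def)

lemma rc_card2: "rigidity_circuit C \<Longrightarrow> f \<in> C \<Longrightarrow> card f = 2"
  by (simp add: rigidity_circuit_def graph_def)

lemma rc_edge_sub: "f \<in> C \<Longrightarrow> f \<subseteq> verts C"
  by (auto simp: verts_def)

lemma rc_fin_edge: "rigidity_circuit C \<Longrightarrow> f \<in> C \<Longrightarrow> finite f"
  by (metis card.infinite rc_card2 zero_neq_numeral)

lemma rc_fin_verts: "rigidity_circuit C \<Longrightarrow> finite (verts C)"
  using rc_finite rc_fin_edge by (auto simp: verts_def)

lemma rc_sparse: "rigidity_circuit C \<Longrightarrow> X \<subseteq> verts C \<Longrightarrow> X \<noteq> verts C \<Longrightarrow> card X \<ge> 2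
   \<Longrightarrow> int (card (span C X)) \<le> 2 * int (card X) - 3"
  unfolding rigidity_circuit_def by blast

lemma rc_count: "rigidity_circuit C \<Longrightarrow> int (card C) = 2 * int (card (verts C)) - 2"
  unfolding rigidity_circuit_def by blast

lemma span_V: "span C (verts C) = C"
  using rc_edge_sub by (auto simp: span_def)

lemma span_sub: "span C X \<subseteq> C"
  by (auto simp: span_def)

lemma span_mono: "X \<subseteq> Y \<Longrightarrow> span C X \<subseteq> span C Y"
  by (auto simp: span_def)

lemma span_Int: "span C (X \<inter> Y) = span C X \<inter> span C Y"
  by (auto simp: span_def)

lemma fin_span: "rigidity_circuit C \<Longrightarrow> finite (span C X)"
  using rc_finite span_sub finite_subset by metis

lemma supermod:
  assumes "rigidity_circuit C"
  shows "card (span C X) + card (span C Y) + card (span C (X \<union> Y) - (span C X \<union> span C Y))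
      = card (span C (X \<union> Y)) + card (span C (X \<inter> Y))"
proof -
  have f: "finite (span C Z)" for Z using fin_span[OF assms] .
  have "card (span C X \<union> span C Y) + card (span C X \<inter> span C Y) = card (span C X) + card (span C Y)"
    using card_Un_Int[OF f f] by simp
  moreover have "card (span C (X \<union> Y)) = card (span C X \<union> span C Y) + card (span C (X \<union> Y) - (span C X \<union> span C Y))"
  proof -
    have s: "span C X \<union> span C Y \<subseteq> span C (X \<union> Y)" by (auto simp: span_def)
    show ?thesis using card_Diff_subset[OF _ s] card_mono[OF f s] f
      by (metis add_diff_inverse_nat finite_Un not_less)
  qed
  ultimately show ?thesis unfolding span_Int by linarith
qed

lemma tight_union:
  assumes C: "rigidity_circuit C" and X: "X \<subseteq> verts C" and Y: "Y \<subseteq> verts C"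
    and U: "X \<union> Y \<noteq> verts C" and tX: "tight C X" and tY: "tight C Y" and I: "card (X \<inter> Y) \<ge> 2"
  shows "tight C (X \<union> Y)" "tight C (X \<inter> Y)"
proof -
  have fin: "finite (verts C)" using rc_fin_verts[OF C] .
  have fX: "finite X" "finite Y" using X Y fin finite_subset by auto
  have cu: "card (X \<union> Y) + card (X \<inter> Y) = card X + card Y" using card_Un_Int fX by metis
  have "card (X \<inter> Y) \<le> card (X \<union> Y)" using fX by (intro card_mono) auto
  hence c2: "card (X \<union> Y) \<ge> 2" using I by linarith
  have s1: "int (card (span C (X \<union> Y))) \<le> 2 * int (card (X \<union> Y)) - 3"
    using rc_sparse[OF C _ U c2] X Y by auto
  have s2: "int (card (span C (X \<inter> Y))) \<le> 2 * int (card (X \<inter> Y)) - 3"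
    using rc_sparse[OF C _ _ I] X Y U by auto
  have sm: "card (span C X) + card (span C Y) \<le> card (span C (X \<union> Y)) + card (span C (X \<inter> Y))"
    using supermod[OF C, of X Y] by linarith
  show "tight C (X \<union> Y)" "tight C (X \<inter> Y)" using s1 s2 sm cu tX tY unfolding tight_def by linarith+
qed



lemma card_le1_edge: "rigidity_circuit C \<Longrightarrow> f \<in> C \<Longrightarrow> f \<subseteq> {a} \<Longrightarrow> False"
proof -
  assume a: "rigidity_circuit C" "f \<in> C" "f \<subseteq> {a}"
  have "card f \<le> card {a}" using a(3) by (intro card_mono) auto
  thus False using rc_card2[OF a(1,2)] by simp
qed

lemma disj_span:
  assumes "rigidity_circuit C" "A \<inter> B \<subseteq> {a}"
  shows "span C A \<inter> span C B = {}"
proof (rule ccontr)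
  assume "span C A \<inter> span C B \<noteq> {}"
  then obtain f where "f \<in> C" "f \<subseteq> A" "f \<subseteq> B" by (auto simp: span_def)
  hence "f \<subseteq> {a}" using assms(2) by blast
  thus False using card_le1_edge[OF assms(1) \<open>f \<in> C\<close>] by blast
qed

lemma pairs_tight:
  assumes C: "rigidity_circuit C" and W: "W \<subseteq> verts C" "W \<noteq> verts C" "card W \<ge> 2"
    and all: "\<forall>x\<in>W. \<forall>y\<in>W. x \<noteq> y \<longrightarrow> (\<exists>X. X \<subseteq> W \<and> x \<in> X \<and> y \<in> X \<and> tight C X)"
  shows "tight C W"
proof -
  have finV: "finite (verts C)" using rc_fin_verts[OF C] .
  have finW: "finite W" using finite_subset[OF W(1) finV] .
  have fin_sub: "finite Y" if "Y \<subseteq> W" for Y using finite_subset[OF that finW] .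
  obtain Q where Q: "Q \<subseteq> W" "card Q = 2" using obtain_subset_with_card_n[OF W(3)] by blast
  then obtain x0 y0 where xy0: "Q = {x0, y0}" "x0 \<noteq> y0" by (auto simp: card_2_iff)
  define P where "P X \<longleftrightarrow> X \<subseteq> W \<and> card X \<ge> 2 \<and> tight C X" for X
  obtain X0 where X0: "X0 \<subseteq> W" "x0 \<in> X0" "y0 \<in> X0" "tight C X0"
  proof -
    have "x0 \<in> W" "y0 \<in> W" using Q xy0 by auto
    thus ?thesis using all xy0(2) that by blast
  qed
  have "card {x0,y0} \<le> card X0" using X0 fin_sub by (intro card_mono) auto
  hence "P X0" using X0 xy0 by (auto simp: P_def)
  then obtain X where PX: "P X" and minX: "\<And>Y. P Y \<Longrightarrow> card W - card X \<le> card W - card Y"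
    using ex_has_least_nat[of P X0 "\<lambda>X. card W - card X"] by blast
  have cardle: "card Y \<le> card W" if "Y \<subseteq> W" for Y using card_mono[OF finW that] .
  have maxX: "card Y \<le> card X" if "P Y" for Y
    using minX[OF that] cardle[of Y] cardle[of X] that PX by (auto simp: P_def)
  have XW: "X \<subseteq> W" and X2: "card X \<ge> 2" and tX: "tight C X" using PX by (auto simp: P_def)
  have finX: "finite X" using fin_sub[OF XW] .
  have bigger: "False" if "Y \<subseteq> W" "tight C Y" "card (X \<inter> Y) \<ge> 2" "\<not> Y \<subseteq> X" for Y
  proof -
    have t: "tight C (X \<union> Y)" using tight_union(1)[OF C _ _ _ tX that(2) that(3)] XW that(1) W by blast
    have "card X < card (X \<union> Y)" using that(4) fin_sub[of "X \<union> Y"] XW that(1)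
      by (intro psubset_card_mono) auto
    moreover have "card (X \<inter> Y) \<le> card (X \<union> Y)" using fin_sub[of "X \<union> Y"] XW that(1) by (intro card_mono) auto
    ultimately show False using maxX[of "X \<union> Y"] t XW that by (auto simp: P_def)
  qed
  have "X = W"
  proof (rule ccontr)
    assume "X \<noteq> W"
    then obtain z where z: "z \<in> W" "z \<notin> X" using XW by blast
    obtain Q2 where Q2: "Q2 \<subseteq> X" "card Q2 = 2" using obtain_subset_with_card_n[OF X2] by blast
    then obtain x1 x2 where x12: "Q2 = {x1, x2}" "x1 \<noteq> x2" by (auto simp: card_2_iff)
    have x1: "x1 \<in> X" and x2: "x2 \<in> X" using Q2 x12 by auto
    have x1W: "x1 \<in> W" and x2W: "x2 \<in> W" using x1 x2 XW by auto
    have "x1 \<noteq> z" "x2 \<noteq> z" using z x1 x2 by auto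
    obtain T1 where T1: "T1 \<subseteq> W" "x1 \<in> T1" "z \<in> T1" "tight C T1" using all x1W z(1) \<open>x1 \<noteq> z\<close> by blast
    obtain T2 where T2: "T2 \<subseteq> W" "x2 \<in> T2" "z \<in> T2" "tight C T2" using all x2W z(1) \<open>x2 \<noteq> z\<close> by blast
    have inter1: "X \<inter> T = {x}" if hT: "T \<subseteq> W" "x \<in> T" "z \<in> T" "tight C T" "x \<in> X" for T x
    proof (rule ccontr)
      assume "X \<inter> T \<noteq> {x}"
      then obtain x' where "x' \<in> X \<inter> T" "x' \<noteq> x" using hT by blast
      hence "card {x, x'} \<le> card (X \<inter> T)" using finX hT by (intro card_mono) auto
      hence "card (X \<inter> T) \<ge> 2" using \<open>x' \<noteq> x\<close> by simp
      thus False using bigger[of T] hT z by blast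
    qed
    have I1: "X \<inter> T1 = {x1}" using inter1 T1 x1 by blast
    have I2: "X \<inter> T2 = {x2}" using inter1 T2 x2 by blast
    have I12: "T1 \<inter> T2 = {z}"
    proof (rule ccontr)
      assume "T1 \<inter> T2 \<noteq> {z}"
      then obtain z' where "z' \<in> T1 \<inter> T2" "z' \<noteq> z" using T1 T2 by blast
      hence "card {z, z'} \<le> card (T1 \<inter> T2)" using fin_sub T1 T2 by (intro card_mono) auto
      hence "card (T1 \<inter> T2) \<ge> 2" using \<open>z' \<noteq> z\<close> by simp
      hence t: "tight C (T1 \<union> T2)" using tight_union(1)[OF C _ _ _ T1(4) T2(4)] T1 T2 W by blast
      have "card {x1, x2} \<le> card (X \<inter> (T1 \<union> T2))" using finX T1 T2 x1 x2 by (intro card_mono) auto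
      hence "card (X \<inter> (T1 \<union> T2)) \<ge> 2" using x12 by simp
      thus False using bigger[of "T1 \<union> T2"] t T1 T2 z by blast
    qed
    define U where "U = X \<union> T1 \<union> T2"
    have UW: "U \<subseteq> W" using XW T1 T2 by (auto simp: U_def)
    have finT: "finite T1" "finite T2" using fin_sub T1 T2 by auto
    have c1: "card (X \<union> T1) + 1 = card X + card T1" using card_Un_Int[OF finX finT(1)] I1 by simp
    have "(X \<union> T1) \<inter> T2 = {x2, z}" using I2 I12 by blast
    hence c2: "card U + 2 = card (X \<union> T1) + card T2"
      using card_Un_Int[of "X \<union> T1" T2] finX finT z x2 \<open>x2 \<noteq> z\<close> by (auto simp: U_def)
    have d1: "span C X \<inter> span C T1 = {}" using disj_span[OF C] I1 by blast
    have d2: "span C X \<inter> span C T2 = {}" using disj_span[OF C] I2 by blast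
    have d3: "span C T1 \<inter> span C T2 = {}" using disj_span[OF C] I12 by blast
    have fs: "finite (span C Z)" for Z using fin_span[OF C] .
    have "card (span C X \<union> span C T1 \<union> span C T2) = card (span C X) + card (span C T1) + card (span C T2)"
      using card_Un_disjoint[OF fs fs] d1 d2 d3 fs by (simp add: card_Un_disjoint Int_Un_distrib2)
    moreover have "card (span C X \<union> span C T1 \<union> span C T2) \<le> card (span C U)"
      by (intro card_mono[OF fs]) (auto simp: span_def U_def)
    ultimately have ge: "card (span C X) + card (span C T1) + card (span C T2) \<le> card (span C U)" by simp
    have "card X \<le> card U" using fin_sub[OF UW] by (intro card_mono) (auto simp: U_def)
    hence U2: "card U \<ge> 2" using X2 by simp
    have le: "int (card (span C U)) \<le> 2 * int (card U) - 3"
      using rc_sparse[OF C _ _ U2] UW W by auto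
    have tU: "tight C U" using ge le c1 c2 tX T1(4) T2(4) unfolding tight_def by linarith
    have "card X < card U" using z T1 fin_sub[OF UW] by (intro psubset_card_mono) (auto simp: U_def)
    thus False using maxX[of U] tU UW U2 by (auto simp: P_def)
  qed
  thus ?thesis using tX by simp
qed



lemma span_del1:
  assumes "u \<in> verts C"
  shows "span C (verts C - {u}) = {f\<in>C. u \<notin> f}"
  using rc_edge_sub by (auto simp: span_def)

lemma card_del1:
  assumes C: "rigidity_circuit C" and u: "u \<in> verts C"
  shows "card (span C (verts C - {u})) + deg C u = card C"
proof -
  have fC: "finite C" using rc_finite[OF C] .
  have "card ({f\<in>C. u \<notin> f} \<union> {f\<in>C. u \<in> f}) = card {f\<in>C. u \<notin> f} + card {f\<in>C. u \<in> f}"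
    using fC by (intro card_Un_disjoint) auto
  moreover have "{f\<in>C. u \<notin> f} \<union> {f\<in>C. u \<in> f} = C" by auto
  ultimately show ?thesis using span_del1[OF u] by (simp add: deg_def)
qed

lemma card_del2:
  assumes C: "rigidity_circuit C" and v: "v \<in> verts C" and w: "w \<in> verts C" and vw: "v \<noteq> w" "{v,w} \<notin> C"
  shows "card (span C (verts C - {v,w})) + deg C v + deg C w = card C"
proof -
  have fC: "finite C" using rc_finite[OF C] .
  have sp: "span C (verts C - {v,w}) = {f\<in>C. v \<notin> f \<and> w \<notin> f}" using rc_edge_sub by (auto simp: span_def)
  have dj: "{f\<in>C. v \<in> f} \<inter> {f\<in>C. w \<in> f} = {}"
  proof (rule ccontr)
    assume "{f\<in>C. v \<in> f} \<inter> {f\<in>C. w \<in> f} \<noteq> {}"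
    then obtain f where f: "f \<in> C" "v \<in> f" "w \<in> f" by blast
    then obtain a b where "f = {a,b}" using rc_card2[OF C f(1)] by (auto simp: card_2_iff)
    hence "f = {v,w}" using f vw by auto
    thus False using f vw by simp
  qed
  have c1: "card ({f\<in>C. v \<in> f} \<union> {f\<in>C. w \<in> f}) = deg C v + deg C w"
    unfolding deg_def using fC dj by (intro card_Un_disjoint) auto
  have "card ({f\<in>C. v \<notin> f \<and> w \<notin> f} \<union> ({f\<in>C. v \<in> f} \<union> {f\<in>C. w \<in> f}))
     = card {f\<in>C. v \<notin> f \<and> w \<notin> f} + card ({f\<in>C. v \<in> f} \<union> {f\<in>C. w \<in> f})"
    using fC by (intro card_Un_disjoint) auto
  moreover have "{f\<in>C. v \<notin> f \<and> w \<notin> f} \<union> ({f\<in>C. v \<in> f} \<union> {f\<in>C. w \<in> f}) = C" by auto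
  ultimately show ?thesis using sp c1 by simp
qed

lemma min_deg:
  assumes C: "rigidity_circuit C" and u: "u \<in> verts C" and n: "card (verts C) \<ge> 3"
  shows "deg C u \<ge> 3"
proof -
  have fin: "finite (verts C)" using rc_fin_verts[OF C] .
  have c: "card (verts C - {u}) = card (verts C) - 1" using u fin by simp
  have c2: "card (verts C - {u}) \<ge> 2" using c n by linarith
  have "int (card (span C (verts C - {u}))) \<le> 2 * int (card (verts C - {u})) - 3"
    by (rule rc_sparse[OF C _ _ c2]) (use u in auto)
  thus ?thesis using card_del1[OF C u] rc_count[OF C] c n by linarith
qed

lemma handshake:
  assumes C: "rigidity_circuit C"
  shows "(\<Sum>u\<in>verts C. deg C u) = 2 * card C"
proof -
  have fC: "finite C" using rc_finite[OF C] .
  have fV: "finite (verts C)" using rc_fin_verts[OF C] .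
  have "(\<Sum>u\<in>verts C. deg C u) = (\<Sum>u\<in>verts C. \<Sum>f\<in>C. if u \<in> f then 1 else 0)"
    unfolding deg_def by (intro sum.cong refl) (subst sum.inter_filter[OF fC, symmetric], simp)
  also have "\<dots> = (\<Sum>f\<in>C. \<Sum>u\<in>verts C. if u \<in> f then 1 else 0)" by (rule sum.swap)
  also have "\<dots> = (\<Sum>f\<in>C. 2)"
  proof (intro sum.cong refl)
    fix f assume f: "f \<in> C"
    have "(\<Sum>u\<in>verts C. if u \<in> f then 1 else 0) = card (verts C \<inter> f)"
      using fV by (simp add: sum.If_cases)
    also have "verts C \<inter> f = f" using rc_edge_sub[OF f] by blast
    finally show "(\<Sum>u\<in>verts C. if u \<in> f then 1 else (0::nat)) = 2" using rc_card2[OF C f] by simp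
  qed
  finally show ?thesis by simp
qed

lemma span_pair:
  assumes C: "rigidity_circuit C" and "{x,y} \<in> C" "x \<noteq> y"
  shows "span C {x,y} = {{x,y}}"
proof -
  have "f = {x,y}" if "f \<in> C" "f \<subseteq> {x,y}" for f
  proof -
    have "card f = 2" using rc_card2[OF C that(1)] .
    thus ?thesis using that(2) assms(3)
      by (metis card_2_iff card_subset_eq finite.emptyI finite_insert)
  qed
  thus ?thesis using assms by (auto simp: span_def)
qed



lemma mk_circuit:
  assumes C: "rigidity_circuit C" and T: "T \<subseteq> verts C" "T \<noteq> verts C"
    and xy: "x \<in> T" "y \<in> T" "x \<noteq> y" "{x,y} \<notin> C" and tT: "tight C T"
    and minT: "\<And>T'. T' \<subseteq> T \<Longrightarrow> T' \<noteq> T \<Longrightarrow> x \<in> T' \<Longrightarrow> y \<in> T' \<Longrightarrow> \<not> tight C T'"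
  shows "rigidity_circuit (insert {x,y} (span C T)) \<and> verts (insert {x,y} (span C T)) = T"
proof -
  define A where "A = insert {x,y} (span C T)"
  have fV: "finite (verts C)" using rc_fin_verts[OF C] .
  have fT: "finite T" using finite_subset[OF T(1) fV] .
  have fs: "finite (span C Z)" for Z using fin_span[OF C] .
  have nin: "{x,y} \<notin> span C T" using xy(4) span_sub by blast
  have cardA: "card A = card (span C T) + 1" using nin fs by (simp add: A_def)
  have gA: "graph A" unfolding graph_def A_def using fs xy(3) rc_card2[OF C] span_sub by fastforce
  have vA: "verts A = T"
  proof
    show "verts A \<subseteq> T" using xy by (auto simp: verts_def A_def span_def)
    show "T \<subseteq> verts A"
    proof
      fix t assume t: "t \<in> T"
      show "t \<in> verts A"
      proof (rule ccontr)
        assume nt: "t \<notin> verts A"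
        hence txy: "t \<noteq> x" "t \<noteq> y" by (auto simp: verts_def A_def)
        have "span C (T - {t}) = span C T" using nt by (auto simp: span_def verts_def A_def)
        moreover have "card {x,y} \<le> card (T - {t})" using fT xy txy by (intro card_mono) auto
        moreover have "card (T - {t}) = card T - 1" using fT t by simp
        moreover have "card T \<ge> 1" using t fT card_0_eq by fastforce
        moreover have "int (card (span C (T - {t}))) \<le> 2 * int (card (T - {t})) - 3"
          if "card (T - {t}) \<ge> 2" by (rule rc_sparse[OF C _ _ that]) (use T in auto)
        ultimately show False using tT xy(3) unfolding tight_def by simp
      qed
    qed
  qed
  have sub: "int (card (span A V')) \<le> 2 * int (card V') - 3" if V': "V' \<subset> T" "card V' \<ge> 2" for V'
  proof -
    have VC: "V' \<subseteq> verts C" "V' \<noteq> verts C" using V' T by auto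
    have sp: "int (card (span C V')) \<le> 2 * int (card V') - 3" using rc_sparse[OF C VC V'(2)] .
    show ?thesis
    proof (cases "x \<in> V' \<and> y \<in> V'")
      case True
      have "\<not> tight C V'" using minT V' True by blast
      hence sp': "int (card (span C V')) \<le> 2 * int (card V') - 4" using sp by (simp add: tight_def)
      have "span A V' \<subseteq> insert {x,y} (span C V')" by (auto simp: span_def A_def)
      hence "card (span A V') \<le> card (insert {x,y} (span C V'))" using fs by (intro card_mono) auto
      also have "\<dots> \<le> card (span C V') + 1" using fs by (simp add: card_insert_if)
      finally show ?thesis using sp' by linarith
    next
      case False
      have "span A V' \<subseteq> span C V'" using False by (auto simp: span_def A_def)
      hence "card (span A V') \<le> card (span C V')" using fs by (intro card_mono) auto
      thus ?thesis using sp by linarith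
    qed
  qed
  have "rigidity_circuit A"
    unfolding rigidity_circuit_def using gA vA cardA tT sub unfolding tight_def by auto
  thus ?thesis using vA by (simp add: A_def)
qed



lemma card_pairs:
  assumes "finite V"
  shows "card {e. e \<subseteq> V \<and> card e = 2} = card V * (card V - 1) div 2"
  using n_subsets[OF assms, of 2] choose_two by simp

lemma fin_pairs: "finite V \<Longrightarrow> finite {e. e \<subseteq> V \<and> card e = 2}"
  by (rule finite_subset[of _ "Pow V"]) auto

lemma rc_sub_pairs: "rigidity_circuit C \<Longrightarrow> C \<subseteq> {e. e \<subseteq> verts C \<and> card e = 2}"
  using rc_edge_sub rc_card2 by blast

lemma pairs_eq: "{e. e \<subseteq> V \<and> card e = 2} = {{x, y} | x y. x \<in> V \<and> y \<in> V \<and> x \<noteq> y}"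
  by (auto simp: card_2_iff)

lemma rc_ge4:
  assumes C: "rigidity_circuit C"
  shows "card (verts C) \<ge> 4"
proof (rule ccontr)
  assume a: "\<not> ?thesis"
  have fV: "finite (verts C)" using rc_fin_verts[OF C] .
  have cnt: "int (card C) = 2 * int (card (verts C)) - 2" using rc_count[OF C] .
  have "C \<noteq> {}"
  proof
    assume "C = {}"
    hence "verts C = {}" by (simp add: verts_def)
    thus False using cnt \<open>C = {}\<close> by simp
  qed
  then obtain f where f: "f \<in> C" by blast
  have "card f \<le> card (verts C)" using fV rc_edge_sub[OF f] by (intro card_mono)
  hence n2: "card (verts C) \<ge> 2" using rc_card2[OF C f] by simp
  have "card C \<le> card {e. e \<subseteq> verts C \<and> card e = 2}"
    using rc_sub_pairs[OF C] fin_pairs[OF fV] by (intro card_mono)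
  hence le: "card C \<le> card (verts C) * (card (verts C) - 1) div 2" using card_pairs[OF fV] by simp
  have "card (verts C) = 2 \<or> card (verts C) = 3" using a n2 by linarith
  thus False
  proof
    assume "card (verts C) = 2" thus False using le cnt by simp
  next
    assume "card (verts C) = 3" thus False using le cnt by simp
  qed
qed

lemma rc_K4:
  assumes C: "rigidity_circuit C" and n: "card (verts C) = 4"
  shows "is_K4 C"
proof -
  have fV: "finite (verts C)" using rc_fin_verts[OF C] .
  have fP: "finite {e. e \<subseteq> verts C \<and> card e = 2}" using fin_pairs[OF fV] .
  have cP: "card {e. e \<subseteq> verts C \<and> card e = 2} = 6" using card_pairs[OF fV] n by simp
  have "card C = 6" using rc_count[OF C] n by simp
  hence "C = {e. e \<subseteq> verts C \<and> card e = 2}"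
    using card_subset_eq[OF fP rc_sub_pairs[OF C]] cP by simp
  hence e: "C = {{x, y} | x y. x \<in> verts C \<and> y \<in> verts C \<and> x \<noteq> y}" by (simp only: pairs_eq)
  show ?thesis unfolding is_K4_def by (rule exI[of _ "verts C"], rule conjI[OF n e])
qed



lemma many_deg3:
  assumes C: "rigidity_circuit C"
  shows "card {u\<in>verts C. deg C u = 3} \<ge> 4"
proof -
  define V where "V = verts C"
  define D where "D = {u\<in>V. deg C u = 3}"
  have fV: "finite V" using rc_fin_verts[OF C] by (simp add: V_def)
  have n4: "card V \<ge> 4" using rc_ge4[OF C] by (simp add: V_def)
  have DV: "D \<subseteq> V" by (auto simp: D_def)
  have hs: "(\<Sum>u\<in>V. deg C u) = 2 * card C" using handshake[OF C] by (simp add: V_def)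
  have cnt: "int (card C) = 2 * int (card V) - 2" using rc_count[OF C] by (simp add: V_def)
  have "(\<Sum>u\<in>V. deg C u) = (\<Sum>u\<in>V - D. deg C u) + (\<Sum>u\<in>D. deg C u)"
    using sum.subset_diff[OF DV fV] .
  moreover have "(\<Sum>u\<in>D. deg C u) = 3 * card D" by (simp add: D_def)
  moreover have "(\<Sum>u\<in>V - D. deg C u) \<ge> (\<Sum>u\<in>V - D. 4)"
  proof (rule sum_mono)
    fix u assume u: "u \<in> V - D"
    have "deg C u \<ge> 3" using min_deg[OF C] u n4 by (simp add: V_def)
    moreover have "deg C u \<noteq> 3" using u by (simp add: D_def)
    ultimately show "4 \<le> deg C u" by simp
  qed
  moreover have "card (V - D) + card D = card V" using card_Diff_subset[OF _ DV] fV DV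
    by (metis card_mono finite_subset le_add_diff_inverse2)
  ultimately have "4 * card V \<le> 2 * card C + card D" using hs by simp
  thus ?thesis using cnt by (simp add: D_def V_def[symmetric])
qed

lemma nonadj_deg3:
  assumes C: "rigidity_circuit C" and n5: "card (verts C) \<ge> 5"
  shows "\<exists>v w. v \<in> verts C \<and> w \<in> verts C \<and> deg C v = 3 \<and> deg C w = 3 \<and> v \<noteq> w \<and> {v,w} \<notin> C"
proof (rule ccontr)
  assume a: "\<not> ?thesis"
  define D where "D = {u\<in>verts C. deg C u = 3}"
  have fV: "finite (verts C)" using rc_fin_verts[OF C] .
  obtain Q where Q: "Q \<subseteq> D" "card Q = 4" "finite Q" using obtain_subset_with_card_n many_deg3[OF C]
    by (metis D_def)
  have QV: "Q \<subseteq> verts C" using Q by (auto simp: D_def)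
  have "{e. e \<subseteq> Q \<and> card e = 2} \<subseteq> span C Q"
  proof
    fix e assume e: "e \<in> {e. e \<subseteq> Q \<and> card e = 2}"
    then obtain x y where xy: "e = {x,y}" "x \<noteq> y" by (auto simp: card_2_iff)
    have "x \<in> D" "y \<in> D" using e xy Q by auto
    hence "{x,y} \<in> C" using a xy by (auto simp: D_def)
    thus "e \<in> span C Q" using e xy by (simp add: span_def)
  qed
  hence "card {e. e \<subseteq> Q \<and> card e = 2} \<le> card (span C Q)"
    using fin_span[OF C] by (intro card_mono)
  hence ge: "card (span C Q) \<ge> 6" using card_pairs[OF Q(3)] Q(2) by simp
  have "Q \<noteq> verts C" using Q n5 by auto
  hence "int (card (span C Q)) \<le> 2 * int (card Q) - 3" using rc_sparse[OF C QV] Q by simp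
  thus False using ge Q by simp
qed



lemma key:
  assumes C: "rigidity_circuit C" and n5: "card (verts C) \<ge> 5"
  shows "\<exists>A B e. rigidity_circuit A \<and> rigidity_circuit B \<and> A \<noteq> B \<and> e \<in> A \<inter> B \<and>
           (verts C, C) = CR A B e \<and> card (verts A) < card (verts C) \<and> card (verts B) < card (verts C)"
proof -
  define V where "V = verts C"
  have fV: "finite V" using rc_fin_verts[OF C] by (simp add: V_def)
  have cnt: "int (card C) = 2 * int (card V) - 2" using rc_count[OF C] by (simp add: V_def)
  obtain v w where vw: "v \<in> V" "w \<in> V" "deg C v = 3" "deg C w = 3" "v \<noteq> w" "{v,w} \<notin> C"
    using nonadj_deg3[OF C n5] by (auto simp: V_def)
  define W where "W = V - {v,w}"
  have cW: "card W = card V - 2" using vw fV by (simp add: W_def)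
  have iW: "card (span C W) + 6 = card C" using card_del2[OF C, of v w] vw unfolding V_def W_def by simp
  have ntW: "\<not> tight C W" using iW cW cnt n5 unfolding tight_def V_def by linarith
  have WV: "W \<subseteq> verts C" "W \<noteq> verts C" using vw by (auto simp: W_def V_def)
  have W2: "card W \<ge> 2" using cW n5 by (simp add: V_def)
  obtain x y where xy: "x \<in> W" "y \<in> W" "x \<noteq> y" and nX: "\<not> (\<exists>X. X \<subseteq> W \<and> x \<in> X \<and> y \<in> X \<and> tight C X)"
  proof -
    have "\<not> (\<forall>x\<in>W. \<forall>y\<in>W. x \<noteq> y \<longrightarrow> (\<exists>X. X \<subseteq> W \<and> x \<in> X \<and> y \<in> X \<and> tight C X))"
      (is "\<not> ?P")
    proof
      assume h: ?P
      show False using pairs_tight[OF C WV W2 h] ntW by simp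
    qed
    then obtain x y where "x \<in> W" "y \<in> W" "x \<noteq> y" "\<not> (\<exists>X. X \<subseteq> W \<and> x \<in> X \<and> y \<in> X \<and> tight C X)"
      by blast
    thus ?thesis using that by blast
  qed
  have nxy: "{x,y} \<notin> C"
  proof
    assume "{x,y} \<in> C"
    hence "tight C {x,y}" using span_pair[OF C _ xy(3)] xy(3) by (simp add: tight_def)
    moreover have "{x,y} \<subseteq> W" using xy by simp
    ultimately show False using nX by blast
  qed
  define e where "e = {x,y}"
  have tightdel: "tight C (V - {u})" if "u \<in> V" "deg C u = 3" for u
  proof -
    have "card (span C (V - {u})) + 3 = card C" using card_del1[OF C, of u] that unfolding V_def by simp
    moreover have "card (V - {u}) = card V - 1" using that fV by simp
    ultimately show ?thesis using cnt n5 unfolding tight_def V_def by linarith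
  qed
  have getmin: "\<exists>T. (T \<subseteq> V - {u} \<and> x \<in> T \<and> y \<in> T \<and> tight C T) \<and>
      (\<forall>T'. T' \<subseteq> V - {u} \<and> x \<in> T' \<and> y \<in> T' \<and> tight C T' \<longrightarrow> card T \<le> card T')"
    if "u \<in> V" "deg C u = 3" "x \<noteq> u" "y \<noteq> u" for u
  proof -
    have "V - {u} \<subseteq> V - {u} \<and> x \<in> V - {u} \<and> y \<in> V - {u} \<and> tight C (V - {u})"
      using tightdel[OF that(1,2)] xy that WV by (auto simp: W_def)
    thus ?thesis by (rule ex_has_least_nat)
  qed
  have xyv: "x \<noteq> v" "y \<noteq> v" "x \<noteq> w" "y \<noteq> w" using xy by (auto simp: W_def)
  obtain T where Tall: "(T \<subseteq> V - {v} \<and> x \<in> T \<and> y \<in> T \<and> tight C T) \<and>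
      (\<forall>T'. T' \<subseteq> V - {v} \<and> x \<in> T' \<and> y \<in> T' \<and> tight C T' \<longrightarrow> card T \<le> card T')"
    using getmin[OF vw(1) vw(3) xyv(1,2)] by (rule exE)
  have T: "T \<subseteq> V - {v}" "x \<in> T" "y \<in> T" "tight C T" using Tall by simp_all
  have minT: "card T \<le> card T'" if "T' \<subseteq> V - {v}" "x \<in> T'" "y \<in> T'" "tight C T'" for T'
    using Tall that by simp
  obtain S where Sall: "(S \<subseteq> V - {w} \<and> x \<in> S \<and> y \<in> S \<and> tight C S) \<and>
      (\<forall>T'. T' \<subseteq> V - {w} \<and> x \<in> T' \<and> y \<in> T' \<and> tight C T' \<longrightarrow> card S \<le> card T')"
    using getmin[OF vw(2) vw(4) xyv(3,4)] by (rule exE)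
  have S: "S \<subseteq> V - {w}" "x \<in> S" "y \<in> S" "tight C S" using Sall by simp_all
  have minS: "card S \<le> card T'" if "T' \<subseteq> V - {w}" "x \<in> T'" "y \<in> T'" "tight C T'" for T'
    using Sall that by simp
  have fT: "finite T" using finite_subset[OF _ fV] T(1) by blast
  have fS: "finite S" using finite_subset[OF _ fV] S(1) by blast
  have wT: "w \<in> T"
  proof (rule ccontr)
    assume "w \<notin> T"
    hence "T \<subseteq> W" using T(1) by (auto simp: W_def)
    thus False using nX T by blast
  qed
  have wS: "w \<notin> S" using S(1) by blast
  have vT: "v \<notin> T" using T(1) by blast
  have TV: "T \<subseteq> verts C" "T \<noteq> verts C" using T(1) vw(1) by (auto simp: V_def)
  have SV: "S \<subseteq> verts C" "S \<noteq> verts C" using S(1) vw(2) by (auto simp: V_def)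
  have circT: "rigidity_circuit (insert e (span C T)) \<and> verts (insert e (span C T)) = T"
    unfolding e_def
  proof (rule mk_circuit[OF C TV T(2,3) xy(3) nxy T(4)])
    fix T' assume a: "T' \<subseteq> T" "T' \<noteq> T" "x \<in> T'" "y \<in> T'"
    have "card T' < card T" using a fT by (intro psubset_card_mono) auto
    thus "\<not> tight C T'" using minT[of T'] a T(1) by fastforce
  qed
  have circS: "rigidity_circuit (insert e (span C S)) \<and> verts (insert e (span C S)) = S"
    unfolding e_def
  proof (rule mk_circuit[OF C SV S(2,3) xy(3) nxy S(4)])
    fix T' assume a: "T' \<subseteq> S" "T' \<noteq> S" "x \<in> T'" "y \<in> T'"
    have "card T' < card S" using a fS by (intro psubset_card_mono) auto
    thus "\<not> tight C T'" using minS[of T'] a S(1) by fastforce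
  qed
  have fTS: "finite (T \<inter> S)" using fT by simp
  have TS2: "card (T \<inter> S) \<ge> 2"
  proof -
    have "card {x,y} \<le> card (T \<inter> S)" using fTS T S by (intro card_mono) auto
    thus ?thesis using xy(3) by simp
  qed
  have ntTS: "\<not> tight C (T \<inter> S)"
  proof
    assume "tight C (T \<inter> S)"
    hence "card T \<le> card (T \<inter> S)" using minT[of "T \<inter> S"] T S by blast
    moreover have "card (T \<inter> S) < card T" using wT wS fT by (intro psubset_card_mono) auto
    ultimately show False by simp
  qed
  have TSV: "T \<union> S = V"
  proof (rule ccontr)
    assume "T \<union> S \<noteq> V"
    hence "tight C (T \<inter> S)" using tight_union(2)[OF C TV(1) SV(1) _ T(4) S(4) TS2] by (simp add: V_def)
    thus False using ntTS by simp
  qed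
  have cover: "span C T \<union> span C S = C"
  proof -
    define R where "R = span C (T \<union> S) - (span C T \<union> span C S)"
    have sm: "card (span C T) + card (span C S) + card R = card (span C (T \<union> S)) + card (span C (T \<inter> S))"
      using supermod[OF C, of T S] by (simp add: R_def)
    have spV: "span C (T \<union> S) = C" using TSV span_V by (simp add: V_def)
    have cu: "card T + card S = card V + card (T \<inter> S)" using card_Un_Int[OF fT fS] TSV by simp
    have TSsub: "T \<inter> S \<subseteq> verts C" "T \<inter> S \<noteq> verts C" using TV by auto
    have sp: "int (card (span C (T \<inter> S))) \<le> 2 * int (card (T \<inter> S)) - 3"
      using rc_sparse[OF C TSsub TS2] .
    have "R = {}"
    proof (rule ccontr)
      assume "R \<noteq> {}"
      moreover have "finite R" using fin_span[OF C] by (simp add: R_def)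
      ultimately have "card R \<ge> 1" by (simp add: Suc_le_eq card_gt_0_iff)
      moreover have "card (span C T) + card (span C S) + card R = card C + card (span C (T \<inter> S))"
        using sm spV by simp
      ultimately have "tight C (T \<inter> S)" using cu sp T(4) S(4) cnt unfolding tight_def by linarith
      thus False using ntTS by simp
    qed
    hence "C \<subseteq> span C T \<union> span C S" using spV by (auto simp: R_def)
    moreover have "span C T \<union> span C S \<subseteq> C" using span_sub by blast
    ultimately show ?thesis by blast
  qed
  define A where "A = insert e (span C T)"
  define B where "B = insert e (span C S)"
  have vA: "verts A = T" and vB: "verts B = S" using circT circS by (auto simp: A_def B_def)
  have "A \<noteq> B" using vA vB wT wS by auto
  moreover have "e \<in> A \<inter> B" by (simp add: A_def B_def)
  moreover have "(verts C, C) = CR A B e"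
  proof -
    have "e \<notin> C" using nxy by (simp add: e_def)
    hence "(A \<union> B) - {e} = C" using cover by (auto simp: A_def B_def)
    thus ?thesis using vA vB TSV by (simp add: CR_def V_def)
  qed
  moreover have "card (verts A) < card (verts C)"
  proof -
    have "T \<subset> verts C" using TV by auto
    thus ?thesis using vA fV by (simp add: V_def psubset_card_mono)
  qed
  moreover have "card (verts B) < card (verts C)"
  proof -
    have "S \<subset> verts C" using SV by auto
    thus ?thesis using vB fV by (simp add: V_def psubset_card_mono)
  qed
  moreover have "rigidity_circuit A" "rigidity_circuit B" using circT circS by (simp_all add: A_def B_def)
  ultimately have "rigidity_circuit A \<and> rigidity_circuit B \<and> A \<noteq> B \<and> e \<in> A \<inter> B \<and>
           (verts C, C) = CR A B e \<and> card (verts A) < card (verts C) \<and> card (verts B) < card (verts C)"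
    by (intro conjI)
  thus ?thesis by (rule exI[of _ A, OF exI[of _ B, OF exI[of _ e]]])
qed



lemma tree_ex:
  assumes "rigidity_circuit C"
  shows "\<exists>T. root T = C \<and> (\<forall>n l. card (verts C) + l \<le> n \<longrightarrow> resultant_tree n l T)"
  using assms
proof (induction "card (verts C)" arbitrary: C rule: less_induct)
  case less
  note C = less.prems
  show ?case
  proof (cases "card (verts C) = 4")
    case True
    have "is_K4 C" using rc_K4[OF C True] .
    thus ?thesis using C by (intro exI[of _ "Leaf C"]) simp
  next
    case False
    hence n5: "card (verts C) \<ge> 5" using rc_ge4[OF C] by simp
    obtain A B e where AB: "rigidity_circuit A" "rigidity_circuit B" "A \<noteq> B" "e \<in> A \<inter> B"
      "(verts C, C) = CR A B e" "card (verts A) < card (verts C)" "card (verts B) < card (verts C)"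
      using key[OF C n5] by blast
    obtain TA where TA: "root TA = A" "\<forall>n l. card (verts A) + l \<le> n \<longrightarrow> resultant_tree n l TA"
      using less.hyps[OF AB(6) AB(1)] by blast
    obtain TB where TB: "root TB = B" "\<forall>n l. card (verts B) + l \<le> n \<longrightarrow> resultant_tree n l TB"
      using less.hyps[OF AB(7) AB(2)] by blast
    have "resultant_tree n l (Node C TA TB)" if "card (verts C) + l \<le> n" for n l
    proof -
      have "resultant_tree n (Suc l) TA" using TA(2) AB(6) that by simp
      moreover have "resultant_tree n (Suc l) TB" using TB(2) AB(7) that by simp
      ultimately show ?thesis using C that TA(1) TB(1) AB(3,4,5) by auto
    qed
    thus ?thesis by (intro exI[of _ "Node C TA TB"]) simp
  qed
qed

theorem theorem1:
  fixes C :: "'a set set"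
  assumes "rigidity_circuit C"
  shows "\<exists>T. root T = C \<and> resultant_tree (card (verts C)) 0 T"
  using tree_ex[OF assms] by fastforce

end
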